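(* Let $\Psi_1 = 1$, and for each integer $k \geq 2$ let $\Psi_k = \frac{1 + \Psi_{k_1} + \Psi_{k_2}}{2}$, where for each $k$ the pair of positive integers $k_1, k_2$ with $k_1 + k_2 = k$ may be chosen arbitrarily. Then for every integer $k \geq 2$ there exist positive constants $C_k$ and $D_k$ (depending only on $k$ and the chosen sequence $(\Psi_j)$) such that for every real $M > 0$ and every finite set $A$ of positive real numbers with $|AA| \leq M|A|$, \[ |kA| \geq \frac{C_k}{M^{D_k}} \cdot |A|^{\Psi_k}. \] In particular, for every integer $k \geq 2$ there exist positive constants $C_k, D_k$ such that for every real $M>0$ and every finite set $A$ of positive real numbers with $|AA| \leq M|A|$, \[ |kA| \geq \frac{C_k}{M^{D_k}} \cdot |A|^{\log_4 (2k)}. \]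
   Context: For a finite set $A$ of real numbers, $AA = \{ab : a, b \in A\}$ is the product set, and $kA = \{a_1 + a_2 + \cdots + a_k : a_1, \dots, a_k \in A\}$ is the $k$-fold sum set. $|X|$ denotes the cardinality of a finite set $X$. *)

theory Defs
  imports Complex_Main
begin

definition prodset :: "real set \<Rightarrow> real set" where
  "prodset A = {a * b | a b. a \<in> A \<and> b \<in> A}"

definition sumset :: "nat \<Rightarrow> real set \<Rightarrow> real set" where
  "sumset k A = {sum_list xs | xs. length xs = k \<and> set xs \<subseteq> A}"

end

theory Submission
  imports Defs
begin


lemma sumset_alt: "sumset k A = sum_list ` {xs. set xs \<subseteq> A \<and> length xs = k}"
  unfolding sumset_def by auto

lemma finite_sumset: "finite A \<Longrightarrow> finite (sumset k A)"
  unfolding sumset_alt by (intro finite_imageI finite_lists_length_eq)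

lemma sumset_mono: "B \<subseteq> A \<Longrightarrow> sumset k B \<subseteq> sumset k A"
  unfolding sumset_def by blast

lemma sumset_add: assumes "s \<in> sumset k1 A" "t \<in> sumset k2 A" shows "s + t \<in> sumset (k1+k2) A"
proof -
  obtain xs ys where "s = sum_list xs" "length xs = k1" "set xs \<subseteq> A"
    "t = sum_list ys" "length ys = k2" "set ys \<subseteq> A" using assms unfolding sumset_def by auto
  thus ?thesis unfolding sumset_def by (auto intro!: exI[of _ "xs @ ys"])
qed

lemma sum_list_pos: assumes "xs \<noteq> []" "\<forall>x\<in>set xs. (x::real) > 0" shows "sum_list xs > 0"
proof -
  obtain y ys where xs: "xs = y # ys" using assms(1) by (cases xs) auto
  have y: "y > 0" using assms(2) xs by simp
  have "\<forall>x\<in>set ys. 0 \<le> x" using assms(2) xs by (simp add: less_imp_le)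
  hence "sum_list ys \<ge> 0" by (intro sum_list_nonneg) auto
  thus ?thesis using xs y by simp
qed

lemma sumset_pos: assumes "k \<ge> 1" "\<forall>a\<in>A. a > 0" "s \<in> sumset k A" shows "s > 0"
proof -
  obtain xs where xs: "s = sum_list xs" "length xs = k" "set xs \<subseteq> A" using assms(3) unfolding sumset_def by auto
  have "xs \<noteq> []" using xs(2) assms(1) by auto
  moreover have "\<forall>x\<in>set xs. x > 0" using xs(3) assms(2) by auto
  ultimately show ?thesis using sum_list_pos xs(1) by simp
qed

lemma sumset_scale: assumes "\<forall>b\<in>B. r * b \<in> A" "s \<in> sumset k B" shows "r * s \<in> sumset k A"
proof -
  obtain xs where xs: "s = sum_list xs" "length xs = k" "set xs \<subseteq> B" using assms(2) unfolding sumset_def by auto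
  have "r * s = sum_list (map ((*) r) xs)" using xs by (simp add: sum_list_const_mult)
  moreover have "set (map ((*) r) xs) \<subseteq> A" using xs assms(1) by auto
  ultimately show ?thesis unfolding sumset_def using xs by force
qed

lemma sumset_1: "sumset 1 A = A"
proof
  show "sumset 1 A \<subseteq> A"
  proof
    fix s assume "s \<in> sumset 1 A"
    then obtain xs where xs: "s = sum_list xs" "length xs = 1" "set xs \<subseteq> A" unfolding sumset_def by auto
    then obtain y where "xs = [y]" by (cases xs) auto
    thus "s \<in> A" using xs by simp
  qed
  show "A \<subseteq> sumset 1 A"
  proof
    fix a assume "a \<in> A"
    hence "sum_list [a] \<in> sumset 1 A" unfolding sumset_def by (intro CollectI exI[of _ "[a]"]) simp
    thus "a \<in> sumset 1 A" by simp
  qed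
qed

lemma sumset_ne: "a \<in> A \<Longrightarrow> sum_list (replicate k a) \<in> sumset k A"
  unfolding sumset_def by force

lemma card_sumset_mono: assumes "finite A" "a \<in> A" "k \<le> k'"
  shows "card (sumset k A) \<le> card (sumset k' A)"
proof -
  let ?c = "sum_list (replicate (k'-k) a)"
  have "(\<lambda>s. s + ?c) ` sumset k A \<subseteq> sumset k' A"
    using sumset_add[OF _ sumset_ne[OF assms(2), of "k'-k"], of _ k] assms(3) by auto
  moreover have "inj_on (\<lambda>s. s + ?c) (sumset k A)" by (auto simp: inj_on_def)
  ultimately show ?thesis
    by (metis assms(1) card_image card_mono finite_sumset)
qed

lemma prodset_mono: "B \<subseteq> A \<Longrightarrow> prodset B \<subseteq> prodset A"
  unfolding prodset_def by blast

lemma finite_prodset: "finite A \<Longrightarrow> finite (prodset A)"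
proof -
  assume "finite A"
  have "prodset A = (\<lambda>(a,b). a*b) ` (A \<times> A)" unfolding prodset_def by auto
  thus ?thesis using \<open>finite A\<close> by simp
qed

lemma card_prodset_ge: assumes "finite A" "\<forall>a\<in>A. a > 0" shows "card A \<le> card (prodset A)"
proof (cases "A = {}")
  case False
  then obtain a where a: "a \<in> A" by auto
  have "(*) a ` A \<subseteq> prodset A" using a unfolding prodset_def by auto
  moreover have "inj_on ((*) a) A" using a assms(2) by (auto simp: inj_on_def)
  ultimately show ?thesis by (metis assms(1) card_image card_mono finite_prodset)
qed simp



lemma wedge:
  fixes R :: "real set" and SA SB :: "real \<Rightarrow> real set" and Y :: "real set"
  assumes finR: "finite R" and finY: "finite Y"
    and fin1: "\<forall>r\<in>R. finite (SA r)" and fin2: "\<forall>r\<in>R. finite (SB r)"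
    and pos1: "\<forall>r\<in>R. \<forall>s\<in>SA r. s > 0" and pos2: "\<forall>r\<in>R. \<forall>s\<in>SB r. s > 0"
    and inY: "\<forall>r\<in>R. \<forall>r'\<in>R. \<forall>s\<in>SA r. \<forall>t\<in>SB r'. s + t \<in> Y \<and> r*s + r'*t \<in> Y"
    and LA: "\<forall>r\<in>R. real (card (SA r)) \<ge> LA" and LB: "\<forall>r\<in>R. real (card (SB r)) \<ge> LB"
    and LAp: "LA \<ge> 0" and LBp: "LB \<ge> 0"
  shows "real (card Y)^2 \<ge> (real (card R) - 1) * LA * LB"
proof (cases "R = {}")
  case True thus ?thesis using LAp LBp by (simp add: mult_nonneg_nonneg order_trans[of _ 0])
next
  case False
  define R2 where "R2 = R - {Max R}"
  define succ where "succ r = Min {x\<in>R. r < x}" for r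
  have succ: "succ r \<in> R \<and> r < succ r \<and> (\<forall>x\<in>R. r < x \<longrightarrow> succ r \<le> x)" if "r \<in> R2" for r
  proof -
    have "r < Max R" using that finR unfolding R2_def by (simp add: order_neq_le_trans)
    hence ne: "{x\<in>R. r < x} \<noteq> {}" using Max_in[OF finR False] by blast
    have fin: "finite {x\<in>R. r < x}" using finR by simp
    show ?thesis unfolding succ_def using Min_in[OF fin ne] Min_le[OF fin] by auto
  qed
  define W where "W r = (\<lambda>(s,t). (s+t, r*s + succ r * t)) ` (SA r \<times> SB (succ r))" for r
  have R2R: "R2 \<subseteq> R" unfolding R2_def by auto
  have cardW: "card (W r) = card (SA r) * card (SB (succ r))" if "r \<in> R2" for r
  proof -
    have ne: "r \<noteq> succ r" using succ[OF that] by simp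
    have "inj_on (\<lambda>(s,t). (s+t, r*s + succ r * t)) (SA r \<times> SB (succ r))"
    proof (rule inj_onI, clarsimp)
      fix s t s' t'
      assume e1: "s + t = s' + t'" and e2: "r*s + succ r * t = r*s' + succ r*t'"
      have "t' = s + t - s'" using e1 by simp
      with e2 have "(r - succ r) * (s - s') = 0" by (simp add: algebra_simps)
      with ne have "s = s'" by simp
      thus "s = s' \<and> t = t'" using e1 by simp
    qed
    thus ?thesis unfolding W_def by (simp add: card_image card_cartesian_product)
  qed
  have Wsub: "W r \<subseteq> Y \<times> Y" if "r \<in> R2" for r
  proof -
    have rR: "r \<in> R" "succ r \<in> R" using succ[OF that] that R2R by auto
    show ?thesis unfolding W_def using inY rR by fastforce
  qed
  have Wprop: "fst p > 0 \<and> r * fst p < snd p \<and> snd p < succ r * fst p" if hh: "r \<in> R2" "p \<in> W r" for r p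
  proof -
    obtain s t where st: "s \<in> SA r" "t \<in> SB (succ r)" "p = (s+t, r*s + succ r * t)"
      using hh(2) unfolding W_def by auto
    have sp: "s > 0" "t > 0" using pos1 pos2 st succ[OF hh(1)] hh(1) R2R by auto
    have lt: "r < succ r" using succ[OF hh(1)] by simp
    have "r * t < succ r * t" using lt sp by simp
    moreover have "r * s < succ r * s" using lt sp by simp
    ultimately show ?thesis using st sp by (simp add: algebra_simps)
  qed
  have disj: "\<forall>r1\<in>R2. \<forall>r2\<in>R2. r1 \<noteq> r2 \<longrightarrow> W r1 \<inter> W r2 = {}"
  proof (intro ballI impI)
    fix r1 r2 assume r: "r1 \<in> R2" "r2 \<in> R2" "r1 \<noteq> r2"
    show "W r1 \<inter> W r2 = {}"
    proof (rule ccontr)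
      assume "W r1 \<inter> W r2 \<noteq> {}"
      then obtain p where p: "p \<in> W r1" "p \<in> W r2" by auto
      have fp: "fst p > 0" using Wprop[OF r(1) p(1)] by simp
      show False
      proof (cases "r1 < r2")
        case True
        hence "succ r1 \<le> r2" using succ[OF r(1)] r(2) R2R by auto
        hence "succ r1 * fst p \<le> r2 * fst p" using fp by simp
        thus False using Wprop[OF r(1) p(1)] Wprop[OF r(2) p(2)] by linarith
      next
        case False
        hence "r2 < r1" using r(3) by simp
        hence "succ r2 \<le> r1" using succ[OF r(2)] r(1) R2R by auto
        hence "succ r2 * fst p \<le> r1 * fst p" using fp by simp
        thus False using Wprop[OF r(1) p(1)] Wprop[OF r(2) p(2)] by linarith
      qed
    qed
  qed
  have finR2: "finite R2" using finR R2R by (meson finite_subset)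
  have finW: "finite (W r)" if "r \<in> R2" for r
    using fin1 fin2 succ[OF that] that R2R unfolding W_def by auto
  have "card (\<Union>r\<in>R2. W r) = (\<Sum>r\<in>R2. card (W r))"
    using card_UN_disjoint[OF finR2 _ disj] finW by simp
  moreover have "card (\<Union>r\<in>R2. W r) \<le> card (Y \<times> Y)"
    using Wsub finY by (intro card_mono) auto
  ultimately have "(\<Sum>r\<in>R2. card (W r)) \<le> card Y * card Y"
    by (simp add: card_cartesian_product)
  hence "real (\<Sum>r\<in>R2. card (W r)) \<le> real (card Y * card Y)" by (simp only: of_nat_le_iff)
  hence "(\<Sum>r\<in>R2. real (card (W r))) \<le> real (card Y)^2" by (simp add: power2_eq_square)
  moreover have "(\<Sum>r\<in>R2. real (card (W r))) \<ge> (\<Sum>r\<in>R2. LA * LB)"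
  proof (rule sum_mono)
    fix r assume r: "r \<in> R2"
    have "LA * LB \<le> real (card (SA r)) * real (card (SB (succ r)))"
      using LA LB r R2R succ[OF r] LAp LBp by (intro mult_mono) auto
    thus "LA * LB \<le> real (card (W r))" using cardW[OF r] by simp
  qed
  moreover have "card R2 = card R - 1" unfolding R2_def using Max_in[OF finR False] finR by simp
  moreover have "card R \<ge> 1" using False finR by (simp add: Suc_leI card_gt_0_iff)
  ultimately have c: "real (card R2) = real (card R) - 1" and
     a: "(\<Sum>r\<in>R2. real (card (W r))) \<le> real (card Y)^2" and
     b: "(\<Sum>r\<in>R2. real (card (W r))) \<ge> real (card R2) * (LA * LB)"
    by (simp_all add: of_nat_diff)
  have "(real (card R) - 1) * LA * LB = real (card R2) * (LA * LB)" by (simp only: c mult.assoc)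
  with a b show ?thesis by linarith
qed



lemma ratio_card:
  fixes A :: "real set"
  assumes finA: "finite A" and pos: "\<forall>a\<in>A. a > 0"
  defines "R \<equiv> (\<lambda>p. snd p / fst p) ` (A \<times> A)"
  shows "card R * card A \<le> card (prodset A) ^ 2"
proof -
  define f where "f r = (SOME p. p \<in> A \<times> A \<and> r = snd p / fst p)" for r
  have f: "f r \<in> A \<times> A \<and> r = snd (f r) / fst (f r)" if "r \<in> R" for r
  proof -
    have "\<exists>p. p \<in> A \<times> A \<and> r = snd p / fst p" using that unfolding R_def by force
    thus ?thesis unfolding f_def by (rule someI_ex)
  qed
  define g where "g q = (snd (f (fst q)) * snd q, fst (f (fst q)) * snd q)" for q
  have "inj_on g (R \<times> A)"
  proof (rule inj_onI)
    fix q1 q2 assume q: "q1 \<in> R \<times> A" "q2 \<in> R \<times> A" "g q1 = g q2"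
    obtain r1 x1 r2 x2 where qq: "q1 = (r1,x1)" "q2 = (r2,x2)" by fastforce
    have r: "r1 \<in> R" "r2 \<in> R" "x1 \<in> A" "x2 \<in> A" using q qq by auto
    have fp1: "fst (f r1) > 0" "snd (f r1) > 0" using f[OF r(1)] pos by auto
    have fp2: "fst (f r2) > 0" "snd (f r2) > 0" using f[OF r(2)] pos by auto
    have x: "x1 > 0" "x2 > 0" using r pos by auto
    have e1: "snd (f r1) * x1 = snd (f r2) * x2" and e2: "fst (f r1) * x1 = fst (f r2) * x2"
      using q(3) qq unfolding g_def by auto
    have "r1 = (snd (f r1) * x1) / (fst (f r1) * x1)" using f[OF r(1)] x by simp
    also have "\<dots> = (snd (f r2) * x2) / (fst (f r2) * x2)" using e1 e2 by simp
    also have "\<dots> = r2" using f[OF r(2)] x by simp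
    finally have "r1 = r2" .
    hence "x1 = x2" using e2 fp1 by simp
    thus "q1 = q2" using qq \<open>r1 = r2\<close> by simp
  qed
  moreover have "g ` (R \<times> A) \<subseteq> prodset A \<times> prodset A"
  proof
    fix y assume "y \<in> g ` (R \<times> A)"
    then obtain r x where rx: "r \<in> R" "x \<in> A" "y = g (r,x)" by auto
    have fa: "snd (f r) \<in> A" "fst (f r) \<in> A" using f[OF rx(1)] by auto
    have y: "y = (snd (f r) * x, fst (f r) * x)" using rx(3) by (simp add: g_def)
    have "snd (f r) * x \<in> prodset A" "fst (f r) * x \<in> prodset A"
      unfolding prodset_def using fa rx(2) by blast+
    thus "y \<in> prodset A \<times> prodset A" using y by simp
  qed
  moreover have "finite (prodset A \<times> prodset A)" using finite_prodset[OF finA] by simp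
  ultimately have "card (R \<times> A) \<le> card (prodset A \<times> prodset A)"
    using card_inj_on_le by blast
  thus ?thesis by (simp add: card_cartesian_product power2_eq_square)
qed

lemma ratio_sum:
  fixes A :: "real set"
  assumes finA: "finite A" and pos: "\<forall>a\<in>A. a > 0"
  defines "R \<equiv> (\<lambda>p. snd p / fst p) ` (A \<times> A)"
  shows "(\<Sum>r\<in>R. card {a\<in>A. r*a \<in> A}) = card A ^ 2"
proof -
  have finR: "finite R" unfolding R_def using finA by simp
  have "(\<Sum>r\<in>R. card {a\<in>A. r*a \<in> A}) = card (SIGMA r:R. {a\<in>A. r*a \<in> A})"
    using card_SigmaI[OF finR, of "\<lambda>r. {a\<in>A. r*a \<in> A}"] finA by simp
  also have "\<dots> = card (A \<times> A)"
  proof (rule bij_betw_same_card[of "\<lambda>q. (snd q, fst q * snd q)"])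
    show "bij_betw (\<lambda>q. (snd q, fst q * snd q)) (SIGMA r:R. {a\<in>A. r*a \<in> A}) (A \<times> A)"
    proof (rule bij_betw_byWitness[where f' = "\<lambda>p. (snd p / fst p, fst p)"])
      show "\<forall>a\<in>SIGMA r:R. {a \<in> A. r * a \<in> A}. (snd (snd a, fst a * snd a) / fst (snd a, fst a * snd a), fst (snd a, fst a * snd a)) = a"
        using pos by auto
      show "\<forall>a'\<in>A \<times> A. (snd (snd a' / fst a', fst a'), fst (snd a' / fst a', fst a') * snd (snd a' / fst a', fst a')) = a'"
        using pos by auto
      show "(\<lambda>q. (snd q, fst q * snd q)) ` (SIGMA r:R. {a \<in> A. r * a \<in> A}) \<subseteq> A \<times> A" by auto
      show "(\<lambda>p. (snd p / fst p, fst p)) ` (A \<times> A) \<subseteq> (SIGMA r:R. {a \<in> A. r * a \<in> A})"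
        unfolding R_def using pos by force
    qed
  qed
  finally show ?thesis by (simp add: card_cartesian_product power2_eq_square)
qed

lemma rich:
  fixes A :: "real set"
  assumes finA: "finite A" and pos: "\<forall>a\<in>A. a > 0" and n1: "card A \<ge> 1"
    and M: "real (card (prodset A)) \<le> M * real (card A)" and Mp: "M > 0"
  shows "\<exists>R. finite R \<and> real (card R) \<ge> real (card A) / 2 \<and>
     (\<forall>r\<in>R. r > 0 \<and> real (card {a\<in>A. r*a \<in> A}) \<ge> real (card A) / (2*M^2))"
proof -
  define n where "n = real (card A)"
  have np: "n > 0" using n1 unfolding n_def by simp
  define R where "R = (\<lambda>p. snd p / fst p) ` (A \<times> A)"
  define B where "B r = card {a\<in>A. r*a \<in> A}" for r
  define T where "T = n / (2*M^2)"
  define R' where "R' = {r\<in>R. real (B r) \<ge> T}"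
  have finR: "finite R" unfolding R_def using finA by simp
  have c1: "real (card R) * n \<le> real (card (prodset A))^2"
  proof -
    have "card R * card A \<le> card (prodset A) ^ 2" using ratio_card[OF finA pos] unfolding R_def .
    hence "real (card R * card A) \<le> real (card (prodset A) ^ 2)" by (simp only: of_nat_le_iff)
    thus ?thesis unfolding n_def by simp
  qed
  have "real (card (prodset A))^2 \<le> (M * n)^2"
    using M unfolding n_def by (intro power_mono) auto
  hence "real (card R) * n \<le> M^2 * n * n" using c1 by (simp add: power2_eq_square algebra_simps)
  hence cR: "real (card R) \<le> M^2 * n" using np by simp
  have s: "(\<Sum>r\<in>R. real (B r)) = n^2"
  proof -
    have "(\<Sum>r\<in>R. B r) = card A ^ 2" using ratio_sum[OF finA pos] unfolding R_def B_def .
    hence "real (\<Sum>r\<in>R. B r) = real (card A ^ 2)" by simp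
    thus ?thesis unfolding n_def by simp
  qed
  have "(\<Sum>r\<in>R - R'. real (B r)) \<le> (\<Sum>r\<in>R - R'. T)"
    by (rule sum_mono) (auto simp: R'_def)
  also have "\<dots> = real (card (R - R')) * T" by simp
  also have "\<dots> \<le> real (card R) * T"
    using finR unfolding T_def using np Mp by (intro mult_right_mono) (auto intro: card_mono)
  also have "\<dots> \<le> M^2 * n * T" using cR np Mp unfolding T_def by (intro mult_right_mono) auto
  also have "\<dots> = n^2/2" unfolding T_def using Mp by (simp add: power2_eq_square)
  finally have s1: "(\<Sum>r\<in>R - R'. real (B r)) \<le> n^2/2" .
  have "(\<Sum>r\<in>R'. real (B r)) \<le> (\<Sum>r\<in>R'. n)"
  proof (rule sum_mono)
    fix r show "real (B r) \<le> n" unfolding B_def n_def using finA by (simp add: card_mono)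
  qed
  hence s2: "(\<Sum>r\<in>R'. real (B r)) \<le> real (card R') * n" by simp
  have "(\<Sum>r\<in>R. real (B r)) = (\<Sum>r\<in>R'. real (B r)) + (\<Sum>r\<in>R - R'. real (B r))"
  proof -
    have "R' \<subseteq> R" unfolding R'_def by auto
    thus ?thesis using sum.subset_diff[OF _ finR, of R' "\<lambda>r. real (B r)"] by simp
  qed
  hence "n^2 \<le> real (card R') * n + n^2/2" using s s1 s2 by linarith
  hence "n * (n/2) \<le> n * real (card R')" by (simp add: power2_eq_square algebra_simps)
  hence cR': "real (card R') \<ge> n/2" using np by (simp add: mult_le_cancel_left_pos)
  show ?thesis
  proof (intro exI conjI)
    show "finite R'" using finR unfolding R'_def by simp
    show "real (card R') \<ge> real (card A) / 2" using cR' unfolding n_def .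
    show "\<forall>r\<in>R'. r > 0 \<and> real (card {a\<in>A. r*a \<in> A}) \<ge> real (card A) / (2*M^2)"
      unfolding R'_def R_def B_def T_def n_def using pos by auto
  qed
qed



lemma key_bound:
  fixes A :: "real set"
  assumes G1: "\<forall>M>0. \<forall>A::real set. finite A \<and> (\<forall>a\<in>A. a > 0) \<and> real (card (prodset A)) \<le> M * real (card A) \<longrightarrow>
            real (card (sumset k1 A)) \<ge> C1 / M powr D1 * real (card A) powr e1"
    and G2: "\<forall>M>0. \<forall>A::real set. finite A \<and> (\<forall>a\<in>A. a > 0) \<and> real (card (prodset A)) \<le> M * real (card A) \<longrightarrow>
            real (card (sumset k2 A)) \<ge> C2 / M powr D2 * real (card A) powr e2"
    and k1: "k1 \<ge> 1" and k2: "k2 \<ge> 1" and e1: "e1 \<ge> 0" and e2: "e2 \<ge> 0"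
    and C1: "C1 > 0" and C2: "C2 > 0"
    and finA: "finite A" and pos: "\<forall>a\<in>A. a > 0" and n1: "card A \<ge> 1"
    and M: "real (card (prodset A)) \<le> M * real (card A)" and Mp: "M > 0"
  shows "real (card (sumset (k1+k2) A))^2 \<ge> (real (card A)/2 - 1) *
      (C1 / (2*M^3) powr D1 * (real (card A)/(2*M^2)) powr e1) *
      (C2 / (2*M^3) powr D2 * (real (card A)/(2*M^2)) powr e2)"
proof -
  define n where "n = real (card A)"
  have np: "n > 0" using n1 unfolding n_def by simp
  obtain R where R: "finite R" "real (card R) \<ge> n / 2"
    "\<forall>r\<in>R. r > 0 \<and> real (card {a\<in>A. r*a \<in> A}) \<ge> n / (2*M^2)"
    using rich[OF finA pos n1 M Mp] unfolding n_def by blast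
  define B where "B r = {a\<in>A. r*a \<in> A}" for r
  define L1 where "L1 = C1 / (2*M^3) powr D1 * (n/(2*M^2)) powr e1"
  define L2 where "L2 = C2 / (2*M^3) powr D2 * (n/(2*M^2)) powr e2"
  have L1p: "L1 \<ge> 0" unfolding L1_def using C1 by simp
  have L2p: "L2 \<ge> 0" unfolding L2_def using C2 by simp
  have BA: "B r \<subseteq> A" for r unfolding B_def by auto
  have finB: "finite (B r)" for r using finA BA by (meson finite_subset)
  have posB: "\<forall>a\<in>B r. a > 0" for r using pos BA by auto
  have Bh: "real (card (prodset (B r))) \<le> (2*M^3) * real (card (B r))" if r: "r \<in> R" for r
  proof -
    have "real (card (prodset (B r))) \<le> real (card (prodset A))"
      using prodset_mono[OF BA] finite_prodset[OF finA] by (simp add: card_mono)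
    also have "\<dots> \<le> M * n" using M unfolding n_def .
    also have "\<dots> \<le> M * (2*M^2 * real (card (B r)))"
    proof -
      have "n / (2*M^2) \<le> real (card (B r))" using R(3) r unfolding B_def by auto
      hence "n \<le> 2*M^2 * real (card (B r))" using Mp by (simp add: field_simps)
      thus ?thesis using Mp by simp
    qed
    also have "\<dots> = (2*M^3) * real (card (B r))" by (simp add: power2_eq_square power3_eq_cube)
    finally show ?thesis .
  qed
  have Lb: "real (card (B r)) powr e \<ge> (n/(2*M^2)) powr e" if r: "r \<in> R" and e: "e \<ge> 0" for r e
  proof -
    have "n / (2*M^2) \<le> real (card (B r))" using R(3) r unfolding B_def by auto
    moreover have "n / (2*M^2) \<ge> 0" using np Mp by simp
    ultimately show ?thesis using e by (simp add: powr_mono2)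
  qed
  have M3: "2*M^3 > 0" using Mp by simp
  have S1: "real (card (sumset k1 (B r))) \<ge> L1" if r: "r \<in> R" for r
  proof -
    have "C1 / (2*M^3) powr D1 * real (card (B r)) powr e1 \<le> real (card (sumset k1 (B r)))"
      using G1 M3 finB posB Bh[OF r] by blast
    moreover have "C1 / (2*M^3) powr D1 * (n/(2*M^2)) powr e1 \<le> C1 / (2*M^3) powr D1 * real (card (B r)) powr e1"
      using Lb[OF r e1] C1 by (intro mult_left_mono) auto
    ultimately show ?thesis unfolding L1_def by linarith
  qed
  have S2: "real (card (sumset k2 (B r))) \<ge> L2" if r: "r \<in> R" for r
  proof -
    have "C2 / (2*M^3) powr D2 * real (card (B r)) powr e2 \<le> real (card (sumset k2 (B r)))"
      using G2 M3 finB posB Bh[OF r] by blast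
    moreover have "C2 / (2*M^3) powr D2 * (n/(2*M^2)) powr e2 \<le> C2 / (2*M^3) powr D2 * real (card (B r)) powr e2"
      using Lb[OF r e2] C2 by (intro mult_left_mono) auto
    ultimately show ?thesis unfolding L2_def by linarith
  qed
  have inY: "\<forall>r\<in>R. \<forall>r'\<in>R. \<forall>s\<in>sumset k1 (B r). \<forall>t\<in>sumset k2 (B r').
     s + t \<in> sumset (k1+k2) A \<and> r*s + r'*t \<in> sumset (k1+k2) A"
  proof (intro ballI conjI)
    fix r r' s t assume h: "r \<in> R" "r' \<in> R" "s \<in> sumset k1 (B r)" "t \<in> sumset k2 (B r')"
    have s: "s \<in> sumset k1 A" using h(3) sumset_mono[OF BA] by blast
    have t: "t \<in> sumset k2 A" using h(4) sumset_mono[OF BA] by blast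
    show "s + t \<in> sumset (k1+k2) A" using sumset_add[OF s t] .
    have "r*s \<in> sumset k1 A" by (rule sumset_scale[OF _ h(3)]) (auto simp: B_def)
    moreover have "r'*t \<in> sumset k2 A" by (rule sumset_scale[OF _ h(4)]) (auto simp: B_def)
    ultimately show "r*s + r'*t \<in> sumset (k1+k2) A" by (rule sumset_add)
  qed
  have W: "real (card (sumset (k1+k2) A))^2 \<ge> (real (card R) - 1) * L1 * L2"
  proof (rule wedge[where SA="\<lambda>r. sumset k1 (B r)" and SB="\<lambda>r. sumset k2 (B r)"])
    show "finite R" by (rule R(1))
    show "finite (sumset (k1+k2) A)" by (rule finite_sumset[OF finA])
    show "\<forall>r\<in>R. finite (sumset k1 (B r))" using finite_sumset[OF finB] by blast
    show "\<forall>r\<in>R. finite (sumset k2 (B r))" using finite_sumset[OF finB] by blast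
    show "\<forall>r\<in>R. \<forall>s\<in>sumset k1 (B r). s > 0" using sumset_pos[OF k1 posB] by blast
    show "\<forall>r\<in>R. \<forall>s\<in>sumset k2 (B r). s > 0" using sumset_pos[OF k2 posB] by blast
    show "\<forall>r\<in>R. \<forall>r'\<in>R. \<forall>s\<in>sumset k1 (B r). \<forall>t\<in>sumset k2 (B r').
     s + t \<in> sumset (k1+k2) A \<and> r*s + r'*t \<in> sumset (k1+k2) A" by (rule inY)
    show "\<forall>r\<in>R. L1 \<le> real (card (sumset k1 (B r)))" using S1 by blast
    show "\<forall>r\<in>R. L2 \<le> real (card (sumset k2 (B r)))" using S2 by blast
    show "0 \<le> L1" by (rule L1p)
    show "0 \<le> L2" by (rule L2p)
  qed
  have "(n/2 - 1) * L1 * L2 \<le> (real (card R) - 1) * L1 * L2"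
    using R(2) L1p L2p by (intro mult_right_mono) auto
  with W show ?thesis unfolding L1_def L2_def n_def by linarith
qed



lemma alg_eq:
  fixes M n C1 C2 D1 D2 e1 e2 :: real
  assumes M: "M > 0" and n: "n > 0" and C1: "C1 > 0" and C2: "C2 > 0"
  defines "K \<equiv> C1 * C2 / 4 * exp (-(D1+D2+e1+e2) * ln 2)"
    and "D \<equiv> (3*D1 + 3*D2 + 2*e1 + 2*e2)/2" and "e \<equiv> (1+e1+e2)/2"
  shows "(sqrt K / M powr D * n powr e)^2 = n/4 * (C1/(2*M^3) powr D1 * (n/(2*M^2)) powr e1) *
            (C2/(2*M^3) powr D2 * (n/(2*M^2)) powr e2)"
proof -
  have Kp: "K > 0" unfolding K_def using C1 C2 by simp
  have lp: "(sqrt K / M powr D * n powr e)^2 > 0" using Kp M n by simp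
  have rp: "n/4 * (C1/(2*M^3) powr D1 * (n/(2*M^2)) powr e1) *
            (C2/(2*M^3) powr D2 * (n/(2*M^2)) powr e2) > 0" using M n C1 C2 by simp
  have "ln ((sqrt K / M powr D * n powr e)^2) = ln (n/4 * (C1/(2*M^3) powr D1 * (n/(2*M^2)) powr e1) *
            (C2/(2*M^3) powr D2 * (n/(2*M^2)) powr e2))"
    using M n C1 C2 Kp
    apply (simp add: ln_mult ln_div ln_powr ln_realpow ln_sqrt K_def D_def e_def)
    apply (simp add: field_simps)
    done
  thus ?thesis using lp rp by simp
qed



definition good :: "nat \<Rightarrow> real \<Rightarrow> bool" where
  "good k e \<longleftrightarrow> (\<exists>C>0. \<exists>D>0. \<forall>M::real>0. \<forall>A::real set.
            finite A \<and> (\<forall>a\<in>A. a > 0) \<and> real (card (prodset A)) \<le> M * real (card A) \<longrightarrow>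
            real (card (sumset k A)) \<ge> C / M powr D * real (card A) powr e)"

lemma M_ge1: assumes "finite A" "\<forall>a\<in>A. a > 0" "card A \<ge> 1" "real (card (prodset A)) \<le> M * real (card A)"
  shows "M \<ge> 1"
proof -
  have "real (card A) \<le> M * real (card A)" using card_prodset_ge[OF assms(1,2)] assms(4) by linarith
  thus ?thesis using assms(3) by simp
qed

lemma good_step:
  assumes g1: "good k1 e1" and g2: "good k2 e2" and k1: "k1 \<ge> 1" and k2: "k2 \<ge> 1"
    and e1: "e1 \<ge> 0" and e2: "e2 \<ge> 0"
  shows "good (k1+k2) ((1+e1+e2)/2)"
proof -
  obtain C1 D1 where C1: "C1 > 0" "D1 > 0" and G1: "\<forall>M::real>0. \<forall>A::real set.
            finite A \<and> (\<forall>a\<in>A. a > 0) \<and> real (card (prodset A)) \<le> M * real (card A) \<longrightarrow>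
            real (card (sumset k1 A)) \<ge> C1 / M powr D1 * real (card A) powr e1"
    using g1 unfolding good_def by blast
  obtain C2 D2 where C2: "C2 > 0" "D2 > 0" and G2: "\<forall>M::real>0. \<forall>A::real set.
            finite A \<and> (\<forall>a\<in>A. a > 0) \<and> real (card (prodset A)) \<le> M * real (card A) \<longrightarrow>
            real (card (sumset k2 A)) \<ge> C2 / M powr D2 * real (card A) powr e2"
    using g2 unfolding good_def by blast
  define K where "K \<equiv> C1 * C2 / 4 * exp (-(D1+D2+e1+e2) * ln 2)"
  define D where "D \<equiv> (3*D1 + 3*D2 + 2*e1 + 2*e2)/2"
  define e where "e \<equiv> (1+e1+e2)/2"
  define C where "C = min (sqrt K) (3 powr (-e))"
  have Kp: "K > 0" unfolding K_def using C1 C2 by simp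
  have Cp: "C > 0" unfolding C_def using Kp by simp
  have Dp: "D > 0" unfolding D_def using C1 C2 e1 e2 by simp
  have ep: "e \<ge> 0" unfolding e_def using e1 e2 by simp
  have "good (k1+k2) e" unfolding good_def
  proof (rule exI[of _ C], rule conjI[OF Cp], rule exI[of _ D], rule conjI[OF Dp], intro allI impI)
    fix M :: real and A :: "real set"
    assume Mp: "M > 0" and h: "finite A \<and> (\<forall>a\<in>A. a > 0) \<and> real (card (prodset A)) \<le> M * real (card A)"
    hence finA: "finite A" and pos: "\<forall>a\<in>A. a > 0" and hM: "real (card (prodset A)) \<le> M * real (card A)" by auto
    define n where "n = real (card A)"
    show "C / M powr D * real (card A) powr e \<le> real (card (sumset (k1 + k2) A))"
    proof (cases "card A = 0")
      case True thus ?thesis by simp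
    next
      case False
      hence n1: "card A \<ge> 1" by simp
      have M1: "M \<ge> 1" using M_ge1[OF finA pos n1 hM] .
      have MD: "M powr D \<ge> 1" using M1 Dp by (simp add: ge_one_powr_ge_zero)
      have lhs0: "C / M powr D * n powr e \<ge> 0" using Cp by simp
      show ?thesis
      proof (cases "card A \<le> 3")
        case True
        obtain a where a: "a \<in> A" using False by fastforce
        have "sumset (k1+k2) A \<noteq> {}" using sumset_ne[OF a] by blast
        hence c1: "real (card (sumset (k1+k2) A)) \<ge> 1"
          using finite_sumset[OF finA] by (simp add: Suc_leI card_gt_0_iff)
        have "C / M powr D \<le> C" using MD Cp by (simp add: divide_le_eq)
        hence "C / M powr D * n powr e \<le> C * n powr e" by (rule mult_right_mono) simp
        also have "\<dots> \<le> 3 powr (-e) * 3 powr e"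
          using True ep Cp unfolding C_def n_def
          by (intro mult_mono powr_mono2) auto
        also have "\<dots> = 1" by (simp add: powr_add[symmetric])
        finally show ?thesis using c1 unfolding n_def by linarith
      next
        case False
        hence n4: "n \<ge> 4" unfolding n_def by simp
        note kb = key_bound[OF G1 G2 k1 k2 e1 e2 C1(1) C2(1) finA pos n1 hM Mp]
        have "(sqrt K / M powr D * n powr e)^2 = n/4 * (C1/(2*M^3) powr D1 * (n/(2*M^2)) powr e1) *
            (C2/(2*M^3) powr D2 * (n/(2*M^2)) powr e2)"
          unfolding K_def D_def e_def using alg_eq[OF Mp _ C1(1) C2(1)] n4 by simp
        also have "\<dots> \<le> (n/2 - 1) * (C1/(2*M^3) powr D1 * (n/(2*M^2)) powr e1) *
            (C2/(2*M^3) powr D2 * (n/(2*M^2)) powr e2)"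
          using n4 C1 C2 by (intro mult_right_mono) auto
        also have "\<dots> \<le> real (card (sumset (k1+k2) A))^2" using kb unfolding n_def .
        finally have sq: "(sqrt K / M powr D * n powr e)^2 \<le> real (card (sumset (k1+k2) A))^2" .
        have "sqrt K / M powr D * n powr e \<le> real (card (sumset (k1+k2) A))"
          using power2_le_imp_le[OF sq] by simp
        moreover have "C / M powr D * n powr e \<le> sqrt K / M powr D * n powr e"
          unfolding C_def by (intro mult_right_mono divide_right_mono) auto
        ultimately show ?thesis unfolding n_def by linarith
      qed
    qed
  qed
  thus ?thesis using e_def by simp
qed


lemma exists_pow2: "k \<ge> (1::nat) \<Longrightarrow> \<exists>m. 2^m \<le> k \<and> k < 2^(Suc m)"
proof (induction k rule: less_induct)
  case (less k)
  show ?case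
  proof (cases "k = 1")
    case True thus ?thesis by (intro exI[of _ 0]) auto
  next
    case False
    hence "k div 2 \<ge> 1" "k div 2 < k" using less.prems by auto
    then obtain m where "2^m \<le> k div 2" "k div 2 < 2^(Suc m)" using less.IH by blast
    thus ?thesis by (intro exI[of _ "Suc m"]) auto
  qed
qed

lemma log4_bound: assumes "2^m \<le> k" "k < 2^(Suc m)" shows "log 4 (2 * real k) \<le> 1 + real m / 2"
proof -
  have kp: "real k > 0" using assms(1) by (metis of_nat_0_less_iff order_less_le_trans zero_less_numeral zero_less_power)
  have "k \<le> 2^(Suc m)" using assms(2) by simp
  hence "real k \<le> real (2^(Suc m))" by (simp only: of_nat_le_iff)
  hence "2 * real k \<le> 2^(m+2)" by simp
  hence "log 4 (2 * real k) \<le> log 4 (2^(m+2))" using kp by simp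
  also have "\<dots> = real (m+2) * log 4 2" by (rule log_nat_power) simp
  also have "log 4 (2::real) = 1/2"
  proof -
    have "ln (4::real) = 2 * ln 2" using ln_realpow[of "2::real" 2] by simp
    thus ?thesis by (simp add: log_def)
  qed
  finally show ?thesis by (simp add: field_simps)
qed
lemma good_1: "good 1 1"
  unfolding good_def
proof (intro exI[of _ 1] conjI allI impI)
  fix M :: real and A :: "real set"
  assume Mp: "M > 0" and h: "finite A \<and> (\<forall>a\<in>A. a > 0) \<and> real (card (prodset A)) \<le> M * real (card A)"
  show "1 / M powr 1 * real (card A) powr 1 \<le> real (card (sumset 1 A))"
  proof (cases "card A = 0")
    case True thus ?thesis by simp
  next
    case False
    hence "card A \<ge> 1" by simp
    hence "M \<ge> 1" using M_ge1[of A M] h by blast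
    hence "1 / M * real (card A) \<le> real (card A)"
    proof -
      have "real (card A) * 1 \<le> real (card A) * M" using \<open>M \<ge> 1\<close> by (intro mult_left_mono) auto
      thus ?thesis using Mp by (simp add: divide_le_eq mult.commute)
    qed
    moreover have "sumset 1 A = A" by (rule sumset_1)
    ultimately show ?thesis using Mp by simp
  qed
qed simp_all

lemma good_weaken: assumes "good k e" "e' \<le> e" shows "good k e'"
proof -
  obtain C D where CD: "C > 0" "D > 0" and G: "\<forall>M::real>0. \<forall>A::real set.
            finite A \<and> (\<forall>a\<in>A. a > 0) \<and> real (card (prodset A)) \<le> M * real (card A) \<longrightarrow>
            real (card (sumset k A)) \<ge> C / M powr D * real (card A) powr e"
    using assms(1) unfolding good_def by blast
  show ?thesis unfolding good_def
  proof (rule exI[of _ C], rule conjI[OF CD(1)], rule exI[of _ D], rule conjI[OF CD(2)], intro allI impI)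
    fix M :: real and A :: "real set"
    assume Mp: "M > 0" and h: "finite A \<and> (\<forall>a\<in>A. a > 0) \<and> real (card (prodset A)) \<le> M * real (card A)"
    show "C / M powr D * real (card A) powr e' \<le> real (card (sumset k A))"
    proof (cases "card A = 0")
      case True thus ?thesis by simp
    next
      case False
      hence "real (card A) powr e' \<le> real (card A) powr e" using assms(2) by (intro powr_mono) auto
      hence "C / M powr D * real (card A) powr e' \<le> C / M powr D * real (card A) powr e"
        using CD by (intro mult_left_mono) auto
      thus ?thesis using G Mp h by fastforce
    qed
  qed
qed

lemma good_mono_k: assumes "good k e" "k \<le> k'" shows "good k' e"
proof -
  obtain C D where CD: "C > 0" "D > 0" and G: "\<forall>M::real>0. \<forall>A::real set.
            finite A \<and> (\<forall>a\<in>A. a > 0) \<and> real (card (prodset A)) \<le> M * real (card A) \<longrightarrow>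
            real (card (sumset k A)) \<ge> C / M powr D * real (card A) powr e"
    using assms(1) unfolding good_def by blast
  show ?thesis unfolding good_def
  proof (rule exI[of _ C], rule conjI[OF CD(1)], rule exI[of _ D], rule conjI[OF CD(2)], intro allI impI)
    fix M :: real and A :: "real set"
    assume Mp: "M > 0" and h: "finite A \<and> (\<forall>a\<in>A. a > 0) \<and> real (card (prodset A)) \<le> M * real (card A)"
    show "C / M powr D * real (card A) powr e \<le> real (card (sumset k' A))"
    proof (cases "card A = 0")
      case True thus ?thesis by simp
    next
      case False
      then obtain a where "a \<in> A" by fastforce
      hence "card (sumset k A) \<le> card (sumset k' A)" using card_sumset_mono h assms(2) by blast
      thus ?thesis using G Mp h by (meson of_nat_le_iff order_trans)
    qed
  qed
qed

lemma good_psi: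
  fixes \<Psi> :: "nat \<Rightarrow> real"
  assumes psi1: "\<Psi> 1 = 1"
    and psi_rec: "\<forall>k\<ge>2. \<exists>k1 k2. k1 \<ge> 1 \<and> k2 \<ge> 1 \<and> k1 + k2 = k \<and>
                     \<Psi> k = (1 + \<Psi> k1 + \<Psi> k2) / 2"
  shows "k \<ge> 1 \<Longrightarrow> good k (\<Psi> k) \<and> \<Psi> k \<ge> 1"
proof (induction k rule: less_induct)
  case (less k)
  show ?case
  proof (cases "k = 1")
    case True thus ?thesis using psi1 good_1 by simp
  next
    case False
    hence "k \<ge> 2" using less.prems by simp
    then obtain k1 k2 where kk: "k1 \<ge> 1" "k2 \<ge> 1" "k1 + k2 = k" "\<Psi> k = (1 + \<Psi> k1 + \<Psi> k2) / 2"
      using psi_rec by blast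
    have i1: "good k1 (\<Psi> k1) \<and> \<Psi> k1 \<ge> 1" using less.IH[of k1] kk by simp
    have i2: "good k2 (\<Psi> k2) \<and> \<Psi> k2 \<ge> 1" using less.IH[of k2] kk by simp
    have "good (k1+k2) ((1 + \<Psi> k1 + \<Psi> k2) / 2)"
      using good_step[of k1 "\<Psi> k1" k2 "\<Psi> k2"] i1 i2 kk by simp
    moreover have "(1 + \<Psi> k1 + \<Psi> k2) / 2 = \<Psi> k" using kk(4) by simp
    ultimately have "good k (\<Psi> k)" using kk(3) by simp
    moreover have "\<Psi> k \<ge> 1" using kk(4) i1 i2 by simp
    ultimately show ?thesis by simp
  qed
qed

lemma good_pow2: "good (2^m) (1 + real m / 2)"
proof (induction m)
  case 0 thus ?case using good_1 by simp
next
  case (Suc m)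
  have "good (2^m + 2^m) ((1 + (1 + real m / 2) + (1 + real m / 2)) / 2)"
    using good_step[OF Suc.IH Suc.IH] by simp
  moreover have "(1 + (1 + real m / 2) + (1 + real m / 2)) / 2 = 1 + real (Suc m) / 2" by simp
  moreover have "(2::nat)^m + 2^m = 2^(Suc m)" by simp
  ultimately show ?case by metis
qed

lemma good_log: assumes "k \<ge> 2" shows "good k (log 4 (2 * real k))"
proof -
  obtain m where m: "2^m \<le> k" "k < 2^(Suc m)" using exists_pow2[of k] assms by auto
  have "good k (1 + real m / 2)" using good_mono_k[OF good_pow2 m(1)] .
  thus ?thesis using good_weaken log4_bound[OF m] by blast
qed

theorem theorem1p2:
  fixes \<Psi> :: "nat \<Rightarrow> real"
  assumes psi1: "\<Psi> 1 = 1"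
    and psi_rec: "\<forall>k\<ge>2. \<exists>k1 k2. k1 \<ge> 1 \<and> k2 \<ge> 1 \<and> k1 + k2 = k \<and>
                     \<Psi> k = (1 + \<Psi> k1 + \<Psi> k2) / 2"
  shows "(\<forall>k::nat\<ge>2. \<exists>C>0. \<exists>D>0. \<forall>M::real>0. \<forall>A::real set.
            finite A \<and> (\<forall>a\<in>A. a > 0) \<and> real (card (prodset A)) \<le> M * real (card A) \<longrightarrow>
            real (card (sumset k A)) \<ge> C / M powr D * real (card A) powr \<Psi> k)
       \<and> (\<forall>k::nat\<ge>2. \<exists>C>0. \<exists>D>0. \<forall>M::real>0. \<forall>A::real set.
            finite A \<and> (\<forall>a\<in>A. a > 0) \<and> real (card (prodset A)) \<le> M * real (card A) \<longrightarrow>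
            real (card (sumset k A)) \<ge> C / M powr D * real (card A) powr log 4 (2 * real k))"
proof (intro conjI allI impI)
  fix k :: nat assume k: "k \<ge> 2"
  show "\<exists>C>0. \<exists>D>0. \<forall>M::real>0. \<forall>A::real set.
            finite A \<and> (\<forall>a\<in>A. a > 0) \<and> real (card (prodset A)) \<le> M * real (card A) \<longrightarrow>
            real (card (sumset k A)) \<ge> C / M powr D * real (card A) powr \<Psi> k"
    using good_psi[OF psi1 psi_rec, of k] k unfolding good_def by simp
next
  fix k :: nat assume k: "k \<ge> 2"
  show "\<exists>C>0. \<exists>D>0. \<forall>M::real>0. \<forall>A::real set.
            finite A \<and> (\<forall>a\<in>A. a > 0) \<and> real (card (prodset A)) \<le> M * real (card A) \<longrightarrow>
            real (card (sumset k A)) \<ge> C / M powr D * real (card A) powr log 4 (2 * real k)"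
    using good_log[OF k] unfolding good_def by simp
qed

end
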